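(* Let $g:\mathbb{R}^N\to\mathbb{R}$ and a family of random functions $g(\theta,\xi)$ differentiable in $\theta$ be given. Given $\theta_1,v_0\in\mathbb{R}^N$, define for $n\ge1$: $v_n=\alpha v_{n-1}+\epsilon_n\nabla_\theta g(\theta_n,\xi_n)$, $\theta_{n+1}=\theta_n-v_n$. Assume: (i) the $\xi_n$ are mutually independent and independent of $\theta_1,v_0$, and $g(x)=\mathbb{E}_{\xi_n}(g(x,\xi_n))$ for all $x$, $n$; (ii) $g$ is non-negative and continuously differentiable; $\{\theta:\nabla g(\theta)=0\}\ne\emptyset$; $\|\nabla g(x)-\nabla g(y)\|\le c\|x-y\|$ for some $c>0$; and there is $M>0$ with $\mathbb{E}_{\xi_n}\big(\|\nabla_\theta g(\theta)-\nabla_\theta g(\theta,\xi_n)\|^2\big)\le M(1+g(\theta))$ for all $\theta$, $n$; (iii) $\alpha\in[0,1)$, and $\epsilon_n>0$ decreases monotonically to $0$ with $\sum\epsilon_n=\infty$, $\sum\epsilon_n^2<\infty$. Then $\sum_{n=0}^{\infty}\mathbb{E}\big(\|v_n\|^2\big)<c(v_0,\theta_1)$ for a constant $c(v_0,\theta_1)$ depending only on $v_0$ and $\theta_1$, and $\sum_{n=0}^\infty\|v_n\|^2<+\infty$ almost surely.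
   Context: $\|\cdot\|$ is the Euclidean norm; $\mathbb{E}_{\xi_n}$ denotes expectation with respect to $\xi_n$ only. *)

theory Defs
  imports "HOL-Probability.Probability"
begin

text \<open>Heavy-ball stochastic gradient iteration.
  hb_iter alpha eps DG theta1 v0 xi omega n = (theta_(n+1), v_n), where
  v_0 = v0, theta_1 = theta1 and for n >= 1:
  v_n = alpha v_(n-1) + eps_n DG(theta_n, xi_n), theta_(n+1) = theta_n - v_n.\<close>

fun hb_iter :: "real \<Rightarrow> (nat \<Rightarrow> real) \<Rightarrow> ('a::real_vector \<Rightarrow> 'b \<Rightarrow> 'a)
    \<Rightarrow> 'a \<Rightarrow> 'a \<Rightarrow> (nat \<Rightarrow> 'w \<Rightarrow> 'b) \<Rightarrow> 'w \<Rightarrow> nat \<Rightarrow> 'a \<times> 'a" where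
  "hb_iter alpha eps DG theta1 v0 xi w 0 = (theta1, v0)"
| "hb_iter alpha eps DG theta1 v0 xi w (Suc n) =
     (let (th, v) = hb_iter alpha eps DG theta1 v0 xi w n;
          v' = alpha *\<^sub>R v + eps (Suc n) *\<^sub>R DG th (xi (Suc n) w)
      in (th - v', v'))"

definition hb_v where
  "hb_v alpha eps DG theta1 v0 xi w n = snd (hb_iter alpha eps DG theta1 v0 xi w n)"

definition hb_theta where
  "hb_theta alpha eps DG theta1 v0 xi w n = fst (hb_iter alpha eps DG theta1 v0 xi w (n - 1))"

end

theory Submission
  imports Defs "HOL-Probability.Probability"
begin


lemma descent:
  fixes g :: "'a::euclidean_space \<Rightarrow> real"
  assumes gd: "\<And>x. (g has_derivative (\<lambda>h. Dg x \<bullet> h)) (at x)"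
    and Lip: "\<And>x y. norm (Dg x - Dg y) \<le> c * norm (x - y)"
  shows "g y \<le> g x + Dg x \<bullet> (y - x) + c / 2 * (norm (y - x))\<^sup>2"
proof -
  define u where "u = y - x"
  define h where "h t = g (x + t *\<^sub>R u) - t * (Dg x \<bullet> u) - c / 2 * t\<^sup>2 * (norm u)\<^sup>2" for t
  have "h 1 \<le> h 0"
  proof (rule DERIV_nonpos_imp_nonincreasing[of 0 1 h])
    fix t :: real assume t: "0 \<le> t" "t \<le> 1"
    have d1: "((\<lambda>t. g (x + t *\<^sub>R u)) has_real_derivative (Dg (x + t *\<^sub>R u) \<bullet> u)) (at t)"
    proof -
      have "((\<lambda>t. x + t *\<^sub>R u) has_derivative (\<lambda>s. s *\<^sub>R u)) (at t)"
        by (auto intro!: derivative_eq_intros)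
      from has_derivative_compose[OF this gd]
      have "((\<lambda>t. g (x + t *\<^sub>R u)) has_derivative (\<lambda>s. Dg (x + t *\<^sub>R u) \<bullet> (s *\<^sub>R u))) (at t)" .
      moreover have "(\<lambda>s. Dg (x + t *\<^sub>R u) \<bullet> (s *\<^sub>R u)) = (*) (Dg (x + t *\<^sub>R u) \<bullet> u)"
        by (simp add: fun_eq_iff)
      ultimately show ?thesis unfolding has_field_derivative_def by simp
    qed
    have "(h has_real_derivative (Dg (x + t *\<^sub>R u) \<bullet> u - Dg x \<bullet> u - c * t * (norm u)\<^sup>2)) (at t)"
      unfolding h_def
      using d1 by (auto intro!: derivative_eq_intros simp: power2_eq_square algebra_simps)
    moreover have "Dg (x + t *\<^sub>R u) \<bullet> u - Dg x \<bullet> u - c * t * (norm u)\<^sup>2 \<le> 0"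
    proof -
      have "Dg (x + t *\<^sub>R u) \<bullet> u - Dg x \<bullet> u = (Dg (x + t *\<^sub>R u) - Dg x) \<bullet> u"
        by (simp add: inner_diff_left)
      also have "\<dots> \<le> norm (Dg (x + t *\<^sub>R u) - Dg x) * norm u"
        by (rule norm_cauchy_schwarz)
      also have "\<dots> \<le> c * norm (t *\<^sub>R u) * norm u"
        using mult_right_mono[OF Lip[of "x + t *\<^sub>R u" x] norm_ge_zero[of u]] by simp
      also have "\<dots> = c * t * (norm u)\<^sup>2" using t by (simp add: power2_eq_square)
      finally show ?thesis by simp
    qed
    ultimately show "\<exists>y. (h has_real_derivative y) (at t) \<and> y \<le> 0" by blast
  qed simp
  then show ?thesis unfolding h_def u_def by (simp add: algebra_simps)
qed

lemma grad_bound: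
  fixes g :: "'a::euclidean_space \<Rightarrow> real"
  assumes gd: "\<And>x. (g has_derivative (\<lambda>h. Dg x \<bullet> h)) (at x)"
    and Lip: "\<And>x y. norm (Dg x - Dg y) \<le> c * norm (x - y)"
    and c: "c > 0" and nn: "\<And>x. g x \<ge> 0"
  shows "(norm (Dg x))\<^sup>2 \<le> 2 * c * g x"
proof -
  have "0 \<le> g (x - (1/c) *\<^sub>R Dg x)" by (rule nn)
  also have "\<dots> \<le> g x + Dg x \<bullet> (- (1/c) *\<^sub>R Dg x) + c / 2 * (norm (- (1/c) *\<^sub>R Dg x))\<^sup>2"
    using descent[OF gd Lip, of "x - (1/c) *\<^sub>R Dg x" x] by simp
  also have "\<dots> = g x - (norm (Dg x))\<^sup>2 / (2 * c)"
  proof -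
    have "Dg x \<bullet> (- (1/c) *\<^sub>R Dg x) = - (norm (Dg x))\<^sup>2 / c"
      by (simp only: inner_scaleR_right power2_norm_eq_inner) simp
    moreover have "(norm (- (1/c) *\<^sub>R Dg x))\<^sup>2 = (norm (Dg x))\<^sup>2 / c\<^sup>2"
      using c by (simp only: norm_scaleR norm_minus_cancel power_mult_distrib) (simp add: power_divide)
    moreover have "\<And>G a::real. G + - a / c + c / 2 * (a / c\<^sup>2) = G - a / (2 * c)"
      using c by (simp add: power2_eq_square field_simps)
    ultimately show ?thesis by (simp only:)
  qed
  finally have "(norm (Dg x))\<^sup>2 / (2 * c) \<le> g x" by simp
  then show ?thesis using c by (simp add: divide_le_eq mult.commute)
qed



lemma (in prob_space) indep_nn_integral:
  assumes ind: "indep_var N X S Y" and F: "F \<in> borel_measurable (N \<Otimes>\<^sub>M S)"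
  shows "(\<integral>\<^sup>+w. F (X w, Y w) \<partial>M) = (\<integral>\<^sup>+w. (\<integral>\<^sup>+y. F (X w, y) \<partial>distr M S Y) \<partial>M)"
proof -
  have rv: "X \<in> measurable M N" "Y \<in> measurable M S"
    and eq: "distr M N X \<Otimes>\<^sub>M distr M S Y = distr M (N \<Otimes>\<^sub>M S) (\<lambda>x. (X x, Y x))"
    using ind unfolding indep_var_distribution_eq by auto
  interpret PY: prob_space "distr M S Y" using rv(2) by (rule prob_space_distr)
  have F': "F \<in> borel_measurable (distr M N X \<Otimes>\<^sub>M distr M S Y)"
    using F by (simp cong: measurable_cong_sets)
  have "(\<integral>\<^sup>+w. F (X w, Y w) \<partial>M) = integral\<^sup>N (distr M (N \<Otimes>\<^sub>M S) (\<lambda>x. (X x, Y x))) F"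
    using rv F by (subst nn_integral_distr) auto
  also have "\<dots> = integral\<^sup>N (distr M N X \<Otimes>\<^sub>M distr M S Y) F" by (simp add: eq)
  also have "\<dots> = (\<integral>\<^sup>+x. \<integral>\<^sup>+y. F (x, y) \<partial>distr M S Y \<partial>distr M N X)"
    by (rule PY.nn_integral_fst[symmetric, OF F'])
  also have "\<dots> = (\<integral>\<^sup>+w. (\<integral>\<^sup>+y. F (X w, y) \<partial>distr M S Y) \<partial>M)"
    using rv PY.borel_measurable_nn_integral_fst[OF F'] by (subst nn_integral_distr) auto
  finally show ?thesis .
qed

definition hstep :: "real \<Rightarrow> (nat \<Rightarrow> real) \<Rightarrow> ('a::real_vector \<Rightarrow> 'b \<Rightarrow> 'a) \<Rightarrow> nat \<Rightarrow> 'a \<times> 'a \<Rightarrow> 'b \<Rightarrow> 'a \<times> 'a" where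
  "hstep alpha eps DG n s y = (fst s - (alpha *\<^sub>R snd s + eps n *\<^sub>R DG (fst s) y), alpha *\<^sub>R snd s + eps n *\<^sub>R DG (fst s) y)"

lemma hb_iter_Suc_step:
  "hb_iter alpha eps DG theta1 v0 xi w (Suc n) = hstep alpha eps DG (Suc n) (hb_iter alpha eps DG theta1 v0 xi w n) (xi (Suc n) w)"
  by (simp add: split_beta Let_def hstep_def)

lemma hb_iter_restrict:
  "n \<le> m \<Longrightarrow> hb_iter alpha eps DG theta1 v0 (\<lambda>i \<omega>. \<omega> i) (restrict (\<lambda>i. xi i w) {1..m}) n
     = hb_iter alpha eps DG theta1 v0 xi w n"
  by (induction n) (simp_all add: hb_iter_Suc_step del: hb_iter.simps(2))

lemma hstep_meas:
  fixes DG :: "'a::euclidean_space \<Rightarrow> 'b \<Rightarrow> 'a"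
  assumes DG_meas: "(\<lambda>(th, x). DG th x) \<in> borel_measurable (borel \<Otimes>\<^sub>M S)"
  shows "(\<lambda>p. hstep alpha eps DG n (fst p) (snd p)) \<in> measurable ((borel :: ('a \<times> 'a) measure) \<Otimes>\<^sub>M S) borel"
proof -
  have f: "(\<lambda>p. fst (fst p)) \<in> measurable ((borel :: ('a \<times> 'a) measure) \<Otimes>\<^sub>M S) (borel :: 'a measure)"
    unfolding borel_prod[symmetric] by measurable
  have s: "(\<lambda>p. snd (fst p)) \<in> measurable ((borel :: ('a \<times> 'a) measure) \<Otimes>\<^sub>M S) (borel :: 'a measure)"
    unfolding borel_prod[symmetric] by measurable
  have d: "(\<lambda>p. DG (fst (fst p)) (snd p)) \<in> measurable ((borel :: ('a \<times> 'a) measure) \<Otimes>\<^sub>M S) (borel :: 'a measure)"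
  proof -
    have "(\<lambda>p. (fst (fst p), snd p)) \<in> measurable ((borel :: ('a \<times> 'a) measure) \<Otimes>\<^sub>M S) (borel \<Otimes>\<^sub>M S)"
      unfolding borel_prod[symmetric] by measurable
    from measurable_compose[OF this DG_meas] show ?thesis unfolding prod.case .
  qed
  have v: "(\<lambda>p. alpha *\<^sub>R snd (fst p) + eps n *\<^sub>R DG (fst (fst p)) (snd p)) \<in> measurable ((borel :: ('a \<times> 'a) measure) \<Otimes>\<^sub>M S) (borel :: 'a measure)"
    by (intro borel_measurable_add borel_measurable_scaleR s d measurable_const) auto
  have t: "(\<lambda>p. fst (fst p) - (alpha *\<^sub>R snd (fst p) + eps n *\<^sub>R DG (fst (fst p)) (snd p))) \<in> measurable ((borel :: ('a \<times> 'a) measure) \<Otimes>\<^sub>M S) (borel :: 'a measure)"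
    by (intro borel_measurable_diff f v)
  have "(\<lambda>p. hstep alpha eps DG n (fst p) (snd p)) \<in> measurable ((borel :: ('a \<times> 'a) measure) \<Otimes>\<^sub>M S) (borel \<Otimes>\<^sub>M borel)"
    unfolding hstep_def by (rule measurable_Pair[OF t v])
  then show ?thesis by (simp only: borel_prod)
qed

lemma hb_iter_meas:
  fixes DG :: "'a::euclidean_space \<Rightarrow> 'b \<Rightarrow> 'a"
  assumes DG_meas: "(\<lambda>(th, x). DG th x) \<in> borel_measurable (borel \<Otimes>\<^sub>M S)"
  shows "n \<le> m \<Longrightarrow> (\<lambda>\<omega>. hb_iter alpha eps DG theta1 v0 (\<lambda>i \<omega>. \<omega> i) \<omega> n) \<in> measurable (PiM {1..m} (\<lambda>_. S)) borel"
proof (induction n)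
  case 0
  then show ?case by simp
next
  case (Suc n)
  have p: "(\<lambda>\<omega>. (hb_iter alpha eps DG theta1 v0 (\<lambda>i \<omega>. \<omega> i) \<omega> n, \<omega> (Suc n))) \<in> measurable (PiM {1..m} (\<lambda>_. S)) (borel \<Otimes>\<^sub>M S)"
    using Suc by (intro measurable_Pair) (auto intro: measurable_component_singleton)
  show ?case
    using measurable_compose[OF p hstep_meas[OF DG_meas, of alpha eps "Suc n"]]
    unfolding hb_iter_Suc_step fst_conv snd_conv .
qed

lemma hb_meas:
  fixes DG :: "'a::euclidean_space \<Rightarrow> 'b \<Rightarrow> 'a"
  assumes DG_meas: "(\<lambda>(th, x). DG th x) \<in> borel_measurable (borel \<Otimes>\<^sub>M S)"
    and xi_meas: "\<And>n. n \<ge> 1 \<Longrightarrow> xi n \<in> measurable M S"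
  shows "(\<lambda>w. hb_iter alpha eps DG theta1 v0 xi w m) \<in> borel_measurable M"
proof -
  have r: "(\<lambda>w. restrict (\<lambda>i. xi i w) {1..m}) \<in> measurable M (PiM {1..m} (\<lambda>_. S))"
    using xi_meas by (intro measurable_restrict) auto
  from measurable_compose[OF r hb_iter_meas[OF DG_meas order_refl]]
  show ?thesis unfolding hb_iter_restrict[OF order_refl] .
qed

lemma hb_key:
  fixes DG :: "'a::euclidean_space \<Rightarrow> 'b \<Rightarrow> 'a"
  assumes P: "prob_space M"
    and DG_meas: "(\<lambda>(th, x). DG th x) \<in> borel_measurable (borel \<Otimes>\<^sub>M S)"
    and xi_meas: "\<And>n. n \<ge> 1 \<Longrightarrow> xi n \<in> measurable M S"
    and indep: "prob_space.indep_vars M (\<lambda>_. S) xi {1..}"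
    and F: "F \<in> borel_measurable ((borel :: ('a \<times> 'a) measure) \<Otimes>\<^sub>M S)"
  shows "(\<integral>\<^sup>+w. F (hb_iter alpha eps DG theta1 v0 xi w m, xi (Suc m) w) \<partial>M)
       = (\<integral>\<^sup>+w. (\<integral>\<^sup>+y. F (hb_iter alpha eps DG theta1 v0 xi w m, y) \<partial>distr M S (xi (Suc m))) \<partial>M)"
proof -
  interpret prob_space M by (rule P)
  have ind: "indep_var (PiM {1..m} (\<lambda>_. S)) (\<lambda>w. restrict (\<lambda>i. xi i w) {1..m}) (PiM {Suc m} (\<lambda>_. S)) (\<lambda>w. restrict (\<lambda>i. xi i w) {Suc m})"
    by (rule indep_var_restrict[OF indep]) auto
  have cs: "(\<lambda>f. f (Suc m)) \<in> measurable (PiM {Suc m} (\<lambda>_. S)) S"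
    by (rule measurable_component_singleton) simp
  have F': "(\<lambda>p. F (hb_iter alpha eps DG theta1 v0 (\<lambda>i \<omega>. \<omega> i) (fst p) m, snd p (Suc m))) \<in> borel_measurable (PiM {1..m} (\<lambda>_. S) \<Otimes>\<^sub>M PiM {Suc m} (\<lambda>_. S))"
  proof -
    have "(\<lambda>p. (hb_iter alpha eps DG theta1 v0 (\<lambda>i \<omega>. \<omega> i) (fst p) m, snd p (Suc m))) \<in> measurable (PiM {1..m} (\<lambda>_. S) \<Otimes>\<^sub>M PiM {Suc m} (\<lambda>_. S)) ((borel :: ('a \<times> 'a) measure) \<Otimes>\<^sub>M S)"
      by (intro measurable_Pair measurable_compose[OF measurable_fst hb_iter_meas[OF DG_meas order_refl]] measurable_compose[OF measurable_snd cs])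
    from measurable_compose[OF this F] show ?thesis .
  qed
  have Fy: "(\<lambda>y. F (s, y)) \<in> borel_measurable S" for s
    using measurable_compose[OF measurable_Pair[OF measurable_const[of s] measurable_ident_sets[OF refl]] F]
    by simp
  have xr: "(\<lambda>w. restrict (\<lambda>i. xi i w) {Suc m}) \<in> measurable M (PiM {Suc m} (\<lambda>_. S))"
    using xi_meas by (intro measurable_restrict) auto
  have inner: "(\<integral>\<^sup>+y. F (s, y (Suc m)) \<partial>distr M (PiM {Suc m} (\<lambda>_. S)) (\<lambda>w. restrict (\<lambda>i. xi i w) {Suc m}))
      = (\<integral>\<^sup>+y. F (s, y) \<partial>distr M S (xi (Suc m)))" for s
  proof -
    have "(\<integral>\<^sup>+y. F (s, y (Suc m)) \<partial>distr M (PiM {Suc m} (\<lambda>_. S)) (\<lambda>w. restrict (\<lambda>i. xi i w) {Suc m}))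
        = (\<integral>\<^sup>+w. F (s, xi (Suc m) w) \<partial>M)"
      using xr measurable_compose[OF cs Fy] by (subst nn_integral_distr) auto
    also have "\<dots> = (\<integral>\<^sup>+y. F (s, y) \<partial>distr M S (xi (Suc m)))"
      using xi_meas[of "Suc m"] Fy by (subst nn_integral_distr) auto
    finally show ?thesis .
  qed
  from indep_nn_integral[OF ind F'] show ?thesis
    unfolding fst_conv snd_conv hb_iter_restrict[OF order_refl] inner by simp
qed



lemma real_alg:
  fixes A V D G X I2 eta Q K alpha c Mv k q ep :: real
  assumes A: "A \<ge> 0" and V: "V \<ge> 0" and G: "G \<ge> 0" and K: "K > 0" and c: "c > 0" and Mv: "Mv > 0"
    and eta: "eta \<ge> 0" and q: "q \<ge> 0"
    and hX: "- X \<le> c\<^sup>2 * k\<^sup>2 / 4 * V" and hI: "I2 \<le> 2 * D + 2 * Mv * (1 + G)"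
    and hD: "D \<le> 2 * c * G" and hG: "G \<le> 2 * A + c * k\<^sup>2 * V"
    and hK: "K * alpha + eta * (c\<^sup>2 * k\<^sup>2 / 4) \<le> K" and hQ: "Q = ep\<^sup>2 * q"
  shows "A - eta * X + Q * I2 + K * alpha * V
    \<le> (1 + (q * (4 * c + 2 * Mv) * (2 + c * k\<^sup>2 / K) + 2 * q * Mv) * ep\<^sup>2) * (A + K * V)
       + (q * (4 * c + 2 * Mv) * (2 + c * k\<^sup>2 / K) + 2 * q * Mv) * ep\<^sup>2"
proof -
  define P where "P = q * (4 * c + 2 * Mv) * (2 + c * k\<^sup>2 / K)"
  define L where "L = A + K * V"
  have L0: "L \<ge> 0" using A V K by (simp add: L_def)
  have P0: "P \<ge> 0" using q c Mv K by (simp add: P_def)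
  have qM: "2 * q * Mv \<ge> 0" using q Mv by simp
  have Q0: "Q \<ge> 0" using q by (simp add: hQ)
  have 1: "- (eta * X) \<le> eta * (c\<^sup>2 * k\<^sup>2 / 4) * V"
    using mult_left_mono[OF hX eta] by (simp add: algebra_simps)
  have t1: "eta * (c\<^sup>2 * k\<^sup>2 / 4) * V + K * alpha * V \<le> K * V"
    using mult_right_mono[OF hK V] by (simp add: algebra_simps)
  have 2: "I2 \<le> (4 * c + 2 * Mv) * G + 2 * Mv"
  proof -
    have "2 * D \<le> 4 * c * G" using hD by (simp add: mult.assoc mult.commute mult.left_commute)
    then show ?thesis using hI by (simp add: algebra_simps)
  qed
  have 3: "(4 * c + 2 * Mv) * G \<le> (4 * c + 2 * Mv) * (2 * A + c * k\<^sup>2 * V)"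
    using c Mv hG by (intro mult_left_mono) auto
  have 4: "2 * A + c * k\<^sup>2 * V \<le> (2 + c * k\<^sup>2 / K) * L"
  proof -
    have "(2 + c * k\<^sup>2 / K) * L = 2 * A + c * k\<^sup>2 * V + (2 * K * V + c * k\<^sup>2 * A / K)"
      using K by (simp add: L_def field_simps)
    moreover have "0 \<le> 2 * K * V + c * k\<^sup>2 * A / K" using K V A c by simp
    ultimately show ?thesis by simp
  qed
  have 5: "I2 \<le> (4 * c + 2 * Mv) * (2 + c * k\<^sup>2 / K) * L + 2 * Mv"
  proof -
    have "(4 * c + 2 * Mv) * (2 * A + c * k\<^sup>2 * V) \<le> (4 * c + 2 * Mv) * ((2 + c * k\<^sup>2 / K) * L)"
      using c Mv 4 by (intro mult_left_mono) auto
    then show ?thesis using 2 3 by (simp add: mult.assoc)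
  qed
  have 6: "Q * I2 \<le> ep\<^sup>2 * (P * L) + ep\<^sup>2 * (2 * q * Mv)"
  proof -
    have "Q * I2 \<le> Q * ((4 * c + 2 * Mv) * (2 + c * k\<^sup>2 / K) * L + 2 * Mv)"
      using mult_left_mono[OF 5 Q0] .
    also have "\<dots> = ep\<^sup>2 * (P * L) + ep\<^sup>2 * (2 * q * Mv)"
      by (simp add: hQ P_def algebra_simps)
    finally show ?thesis .
  qed
  have 7: "ep\<^sup>2 * (P * L) \<le> (P + 2 * q * Mv) * ep\<^sup>2 * L"
  proof -
    have "0 \<le> 2 * q * Mv * ep\<^sup>2 * L" using qM L0 by simp
    then show ?thesis by (simp add: algebra_simps)
  qed
  have 8: "ep\<^sup>2 * (2 * q * Mv) \<le> (P + 2 * q * Mv) * ep\<^sup>2"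
  proof -
    have "0 \<le> P * ep\<^sup>2" using P0 by simp
    then show ?thesis by (simp add: algebra_simps)
  qed
  have "A - eta * X + Q * I2 + K * alpha * V \<le> A + K * V + (P + 2 * q * Mv) * ep\<^sup>2 * L + (P + 2 * q * Mv) * ep\<^sup>2"
    using 1 t1 6 7 8 by linarith
  also have "\<dots> = (1 + (P + 2 * q * Mv) * ep\<^sup>2) * L + (P + 2 * q * Mv) * ep\<^sup>2"
    by (simp add: L_def algebra_simps)
  finally show ?thesis unfolding P_def L_def .
qed

lemma real_alg2:
  fixes A V D G I2 K c Mv k :: real
  assumes A: "A \<ge> 0" and V: "V \<ge> 0" and G: "G \<ge> 0" and K: "K > 0" and c: "c > 0" and Mv: "Mv > 0"
    and hI: "I2 \<le> 2 * D + 2 * Mv * (1 + G)"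
    and hD: "D \<le> 2 * c * G" and hG: "G \<le> 2 * A + c * k\<^sup>2 * V"
  shows "I2 \<le> (4 * c + 2 * Mv) * (2 + c * k\<^sup>2 / K) * (A + K * V) + 2 * Mv"
proof -
  define L where "L = A + K * V"
  have 2: "I2 \<le> (4 * c + 2 * Mv) * G + 2 * Mv"
  proof -
    have "2 * D \<le> 4 * c * G" using hD by (simp add: mult.assoc mult.commute mult.left_commute)
    then show ?thesis using hI by (simp add: algebra_simps)
  qed
  have 3: "(4 * c + 2 * Mv) * G \<le> (4 * c + 2 * Mv) * (2 * A + c * k\<^sup>2 * V)"
    using c Mv hG by (intro mult_left_mono) auto
  have 4: "2 * A + c * k\<^sup>2 * V \<le> (2 + c * k\<^sup>2 / K) * L"
  proof -
    have "(2 + c * k\<^sup>2 / K) * L = 2 * A + c * k\<^sup>2 * V + (2 * K * V + c * k\<^sup>2 * A / K)"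
      using K by (simp add: L_def field_simps)
    moreover have "0 \<le> 2 * K * V + c * k\<^sup>2 * A / K" using K V A c by simp
    ultimately show ?thesis by simp
  qed
  have "(4 * c + 2 * Mv) * (2 * A + c * k\<^sup>2 * V) \<le> (4 * c + 2 * Mv) * ((2 + c * k\<^sup>2 / K) * L)"
    using c Mv 4 by (intro mult_left_mono) auto
  then show ?thesis using 2 3 by (simp add: mult.assoc L_def)
qed



lemma sq_sum_le: "(a + b)\<^sup>2 \<le> 2 * a\<^sup>2 + 2 * (b::real)\<^sup>2"
proof -
  have "0 \<le> (a - b)\<^sup>2" by simp
  then show ?thesis by (simp add: power2_eq_square algebra_simps)
qed

definition lyapL :: "('a::real_normed_vector \<Rightarrow> real) \<Rightarrow> real \<Rightarrow> real \<Rightarrow> 'a \<times> 'a \<Rightarrow> real" where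
  "lyapL g k K s = g (fst s - k *\<^sub>R snd s) + K * (norm (snd s))\<^sup>2"

lemma convex_sq: "0 \<le> a \<Longrightarrow> a \<le> 1 \<Longrightarrow> (a * s + (1 - a) * t)\<^sup>2 \<le> a * s\<^sup>2 + (1 - a) * (t::real)\<^sup>2"
proof -
  assume "0 \<le> a" "a \<le> 1"
  then have "0 \<le> a * (1 - a) * (s - t)\<^sup>2" by simp
  then show ?thesis by (simp add: power2_eq_square algebra_simps)
qed

lemma norm_convex_sq:
  fixes x y :: "'a::real_normed_vector"
  assumes "0 \<le> a" "a < 1" "0 \<le> e"
  shows "(norm (a *\<^sub>R x + e *\<^sub>R y))\<^sup>2 \<le> a * (norm x)\<^sup>2 + e\<^sup>2 / (1 - a) * (norm y)\<^sup>2"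
proof -
  have "norm (a *\<^sub>R x + e *\<^sub>R y) \<le> a * norm x + (1 - a) * (e / (1 - a) * norm y)"
    using assms norm_triangle_ineq[of "a *\<^sub>R x" "e *\<^sub>R y"] by simp
  then have "(norm (a *\<^sub>R x + e *\<^sub>R y))\<^sup>2 \<le> (a * norm x + (1 - a) * (e / (1 - a) * norm y))\<^sup>2"
    by (rule power_mono) simp
  also have "\<dots> \<le> a * (norm x)\<^sup>2 + (1 - a) * (e / (1 - a) * norm y)\<^sup>2"
    using assms by (intro convex_sq) auto
  also have "(1 - a) * (e / (1 - a) * norm y)\<^sup>2 = e\<^sup>2 / (1 - a) * (norm y)\<^sup>2"
    using assms by (simp add: power_mult_distrib power_divide power2_eq_square)
  finally show ?thesis .
qed

locale hbl =
  fixes mu :: "'b measure" and g :: "'a::euclidean_space \<Rightarrow> real" and Dg :: "'a \<Rightarrow> 'a"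
    and DG :: "'a \<Rightarrow> 'b \<Rightarrow> 'a" and c Mv :: real
  assumes prob: "prob_space mu"
    and DG_int: "\<And>x. integrable mu (DG x)"
    and Dg_mean: "\<And>x. Dg x = (\<integral>y. DG x y \<partial>mu)"
    and var: "\<And>th. (\<integral>\<^sup>+ y. ennreal ((norm (Dg th - DG th y))\<^sup>2) \<partial>mu) \<le> ennreal (Mv * (1 + g th))"
    and g_nonneg: "\<And>x. g x \<ge> 0"
    and g_diff: "\<And>x. (g has_derivative (\<lambda>h. Dg x \<bullet> h)) (at x)"
    and Lip: "\<And>x y. norm (Dg x - Dg y) \<le> c * norm (x - y)"
    and c_pos: "c > 0" and Mv_pos: "Mv > 0"
begin

lemma DG_meas: "DG x \<in> borel_measurable mu"
  using DG_int by (rule borel_measurable_integrable)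

lemma sq_nn: "(\<integral>\<^sup>+y. ennreal ((norm (DG th y))\<^sup>2) \<partial>mu) \<le> ennreal (2 * (norm (Dg th))\<^sup>2 + 2 * Mv * (1 + g th))"
proof -
  interpret prob_space mu by (rule prob)
  have pw: "(norm (DG th y))\<^sup>2 \<le> 2 * (norm (Dg th))\<^sup>2 + 2 * (norm (Dg th - DG th y))\<^sup>2" for y
  proof -
    have "norm (DG th y) \<le> norm (Dg th) + norm (Dg th - DG th y)"
      using norm_triangle_ineq4[of "Dg th" "Dg th - DG th y"] by simp
    then have "(norm (DG th y))\<^sup>2 \<le> (norm (Dg th) + norm (Dg th - DG th y))\<^sup>2"
      by (rule power_mono) simp
    also have "\<dots> \<le> 2 * (norm (Dg th))\<^sup>2 + 2 * (norm (Dg th - DG th y))\<^sup>2"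
      by (rule sq_sum_le)
    finally show ?thesis .
  qed
  have meas: "(\<lambda>y. ennreal (2 * (norm (Dg th - DG th y))\<^sup>2)) \<in> borel_measurable mu"
    using DG_meas[of th] by measurable
  have "(\<integral>\<^sup>+y. ennreal ((norm (DG th y))\<^sup>2) \<partial>mu)
      \<le> (\<integral>\<^sup>+y. ennreal (2 * (norm (Dg th))\<^sup>2) + ennreal (2 * (norm (Dg th - DG th y))\<^sup>2) \<partial>mu)"
    using pw by (intro nn_integral_mono) (simp add: ennreal_plus[symmetric] del: ennreal_plus)
  also have "\<dots> = ennreal (2 * (norm (Dg th))\<^sup>2) + (\<integral>\<^sup>+y. ennreal (2 * (norm (Dg th - DG th y))\<^sup>2) \<partial>mu)"
    using meas by (subst nn_integral_add) (auto simp: emeasure_space_1)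
  also have "(\<integral>\<^sup>+y. ennreal (2 * (norm (Dg th - DG th y))\<^sup>2) \<partial>mu) = 2 * (\<integral>\<^sup>+y. ennreal ((norm (Dg th - DG th y))\<^sup>2) \<partial>mu)"
    using DG_meas[of th] by (subst nn_integral_cmult[symmetric]) (auto simp: ennreal_mult)
  also have "\<dots> \<le> 2 * ennreal (Mv * (1 + g th))"
    by (intro mult_left_mono var) simp
  also have "ennreal (2 * (norm (Dg th))\<^sup>2) + 2 * ennreal (Mv * (1 + g th)) = ennreal (2 * (norm (Dg th))\<^sup>2 + 2 * Mv * (1 + g th))"
    using Mv_pos g_nonneg[of th] by (subst ennreal_plus) (auto simp: ennreal_mult mult.assoc)
  finally show ?thesis by simp
qed

lemma sq_int: "integrable mu (\<lambda>y. (norm (DG th y))\<^sup>2)"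
proof (rule integrableI_bounded)
  show "(\<lambda>y. (norm (DG th y))\<^sup>2) \<in> borel_measurable mu" using DG_meas[of th] by measurable
  have "(\<integral>\<^sup>+y. ennreal (norm ((norm (DG th y))\<^sup>2)) \<partial>mu) = (\<integral>\<^sup>+y. ennreal ((norm (DG th y))\<^sup>2) \<partial>mu)"
    by simp
  also have "\<dots> < \<infinity>" using sq_nn[of th] by (rule le_less_trans) simp
  finally show "(\<integral>\<^sup>+y. ennreal (norm ((norm (DG th y))\<^sup>2)) \<partial>mu) < \<infinity>" .
qed

lemma sq_le: "(\<integral>y. (norm (DG th y))\<^sup>2 \<partial>mu) \<le> 2 * (norm (Dg th))\<^sup>2 + 2 * Mv * (1 + g th)"
proof -
  have "ennreal (\<integral>y. (norm (DG th y))\<^sup>2 \<partial>mu) = (\<integral>\<^sup>+y. ennreal ((norm (DG th y))\<^sup>2) \<partial>mu)"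
    by (rule nn_integral_eq_integral[OF sq_int, symmetric]) simp
  also have "\<dots> \<le> ennreal (2 * (norm (Dg th))\<^sup>2 + 2 * Mv * (1 + g th))" by (rule sq_nn)
  finally have le: "ennreal (\<integral>y. (norm (DG th y))\<^sup>2 \<partial>mu) \<le> ennreal (2 * (norm (Dg th))\<^sup>2 + 2 * Mv * (1 + g th))" .
  have "0 \<le> 2 * (norm (Dg th))\<^sup>2 + 2 * Mv * (1 + g th)"
    using Mv_pos g_nonneg[of th] by (intro add_nonneg_nonneg mult_nonneg_nonneg) auto
  with le show ?thesis by (simp only: ennreal_le_iff)
qed

lemma g_theta_le: "0 \<le> k \<Longrightarrow> g (z + k *\<^sub>R v) \<le> 2 * g z + c * k\<^sup>2 * (norm v)\<^sup>2"
proof -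
  assume k: "0 \<le> k"
  have "g (z + k *\<^sub>R v) \<le> g z + Dg z \<bullet> (k *\<^sub>R v) + c / 2 * (norm (k *\<^sub>R v))\<^sup>2"
    using descent[OF g_diff Lip, of "z + k *\<^sub>R v" z] by simp
  also have "Dg z \<bullet> (k *\<^sub>R v) \<le> norm (Dg z) * norm (k *\<^sub>R v)" by (rule norm_cauchy_schwarz)
  also have "norm (Dg z) * norm (k *\<^sub>R v) \<le> (norm (Dg z))\<^sup>2 / (2 * c) + c / 2 * (norm (k *\<^sub>R v))\<^sup>2"
  proof -
    have "0 \<le> (norm (Dg z) - c * norm (k *\<^sub>R v))\<^sup>2 / (2 * c)" using c_pos by simp
    then show ?thesis using c_pos by (simp add: power2_eq_square field_simps)
  qed
  also have "(norm (Dg z))\<^sup>2 / (2 * c) \<le> g z"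
    using grad_bound[OF g_diff Lip c_pos g_nonneg, of z] c_pos by (simp add: field_simps)
  also have "(norm (k *\<^sub>R v))\<^sup>2 = k\<^sup>2 * (norm v)\<^sup>2" using k by (simp add: power_mult_distrib)
  finally show ?thesis by (simp add: algebra_simps)
qed

lemma lyap:
  fixes alpha K e1 :: real and eps :: "nat \<Rightarrow> real" and n :: nat and th v :: 'a
  defines "k \<equiv> alpha / (1 - alpha)"
    and "q \<equiv> c / (2 * (1 - alpha)\<^sup>2) + K / (1 - alpha)"
  defines "Cst \<equiv> q * (4 * c + 2 * Mv) * (2 + c * k\<^sup>2 / K) + 2 * q * Mv"
  assumes a: "0 \<le> alpha" "alpha < 1" and e: "0 < eps n" "eps n \<le> e1"
    and K: "K > 0" "e1 * c\<^sup>2 * k\<^sup>2 / (4 * (1 - alpha)\<^sup>2) \<le> K"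
  shows "(\<integral>\<^sup>+y. ennreal (lyapL g k K (hstep alpha eps DG n (th, v) y)) \<partial>mu)
    \<le> ennreal ((1 + Cst * (eps n)\<^sup>2) * lyapL g k K (th, v) + Cst * (eps n)\<^sup>2)"
proof -
  interpret prob_space mu by (rule prob)
  define ep where "ep = eps n"
  define eta where "eta = ep / (1 - alpha)"
  define z where "z = th - k *\<^sub>R v"
  define Q where "Q = c / 2 * eta\<^sup>2 + K * ep\<^sup>2 / (1 - alpha)"
  have k0: "0 \<le> k" using a by (simp add: k_def)
  have eta0: "0 \<le> eta" using a e by (simp add: eta_def ep_def)
  have Q0: "0 \<le> Q" using a K c_pos by (simp add: Q_def)
  have Qq: "Q = ep\<^sup>2 * q"
    using a by (simp add: Q_def q_def eta_def power_divide field_simps power2_eq_square)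
  define R where "R y = g z - eta * (Dg z \<bullet> DG th y) + Q * (norm (DG th y))\<^sup>2 + K * alpha * (norm v)\<^sup>2" for y
  have pw: "lyapL g k K (hstep alpha eps DG n (th, v) y) \<le> R y" for y
  proof -
    define d where "d = DG th y"
    define v' where "v' = alpha *\<^sub>R v + ep *\<^sub>R d"
    have hs: "hstep alpha eps DG n (th, v) y = (th - v', v')"
      by (simp add: hstep_def v'_def d_def ep_def)
    have zz: "th - v' - k *\<^sub>R v' = z - eta *\<^sub>R d"
    proof -
      have "v' + k *\<^sub>R v' = (1 + k) *\<^sub>R v'" by (simp add: algebra_simps)
      also have "1 + k = 1 / (1 - alpha)" using a by (simp add: k_def field_simps)
      also have "(1 / (1 - alpha)) *\<^sub>R v' = k *\<^sub>R v + eta *\<^sub>R d"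
        by (simp add: v'_def k_def eta_def scaleR_add_right)
      finally have "v' + k *\<^sub>R v' = k *\<^sub>R v + eta *\<^sub>R d" .
      then show ?thesis by (simp add: z_def algebra_simps)
    qed
    have "g (z - eta *\<^sub>R d) \<le> g z + Dg z \<bullet> (- eta *\<^sub>R d) + c / 2 * (norm (- eta *\<^sub>R d))\<^sup>2"
      using descent[OF g_diff Lip, of "z - eta *\<^sub>R d" z] by simp
    also have "\<dots> = g z - eta * (Dg z \<bullet> d) + c / 2 * eta\<^sup>2 * (norm d)\<^sup>2"
      using eta0 by (simp add: power_mult_distrib)
    finally have g1: "g (z - eta *\<^sub>R d) \<le> g z - eta * (Dg z \<bullet> d) + c / 2 * eta\<^sup>2 * (norm d)\<^sup>2" .
    have v1: "(norm v')\<^sup>2 \<le> alpha * (norm v)\<^sup>2 + ep\<^sup>2 / (1 - alpha) * (norm d)\<^sup>2"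
      unfolding v'_def using a e by (intro norm_convex_sq) (auto simp: ep_def)
    have "lyapL g k K (hstep alpha eps DG n (th, v) y) = g (z - eta *\<^sub>R d) + K * (norm v')\<^sup>2"
      by (simp add: lyapL_def hs zz)
    also have "\<dots> \<le> (g z - eta * (Dg z \<bullet> d) + c / 2 * eta\<^sup>2 * (norm d)\<^sup>2)
        + K * (alpha * (norm v)\<^sup>2 + ep\<^sup>2 / (1 - alpha) * (norm d)\<^sup>2)"
      using K by (intro add_mono g1 mult_left_mono v1) auto
    also have "\<dots> = R y" by (simp add: R_def Q_def d_def algebra_simps)
    finally show ?thesis .
  qed
  have L0: "0 \<le> lyapL g k K s" for s
    using K g_nonneg by (simp add: lyapL_def)
  have dmeas: "DG th \<in> borel_measurable mu" by (rule DG_meas)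
  have i1: "integrable mu (\<lambda>y. Dg z \<bullet> DG th y)"
    by (rule integrable_inner_right[OF DG_int])
  have i2: "integrable mu (\<lambda>y. (norm (DG th y))\<^sup>2)" by (rule sq_int)
  have Rint: "integrable mu R"
    unfolding R_def using i1 i2 by auto
  have Rval: "integral\<^sup>L mu R = g z - eta * (Dg z \<bullet> Dg th) + Q * (\<integral>y. (norm (DG th y))\<^sup>2 \<partial>mu) + K * alpha * (norm v)\<^sup>2"
    using i1 i2 DG_int[of th] unfolding R_def by (simp add: Dg_mean[of th] prob_space)
  have "(\<integral>\<^sup>+y. ennreal (lyapL g k K (hstep alpha eps DG n (th, v) y)) \<partial>mu) \<le> (\<integral>\<^sup>+y. ennreal (R y) \<partial>mu)"
    using pw by (intro nn_integral_mono ennreal_leI) simp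
  also have "\<dots> = ennreal (integral\<^sup>L mu R)"
    using pw L0 by (intro nn_integral_eq_integral Rint AE_I2) (meson order_trans)
  also have "\<dots> \<le> ennreal ((1 + Cst * (eps n)\<^sup>2) * lyapL g k K (th, v) + Cst * (eps n)\<^sup>2)"
  proof (rule ennreal_leI)
    have hX: "- (Dg z \<bullet> Dg th) \<le> c\<^sup>2 * k\<^sup>2 / 4 * (norm v)\<^sup>2"
    proof -
      define a where "a = norm (Dg th)"
      define b where "b = c * (k * norm v)"
      have zt: "norm (z - th) = k * norm v" using k0 by (simp add: z_def)
      have n1: "norm (Dg z - Dg th) \<le> b" using Lip[of z th] by (simp add: zt b_def)
      have "- ((Dg z - Dg th) \<bullet> Dg th) \<le> norm (Dg z - Dg th) * a"
        using norm_cauchy_schwarz[of "Dg th - Dg z" "Dg th"] by (simp add: a_def inner_diff_left norm_minus_commute)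
      also have "\<dots> \<le> b * a" by (rule mult_right_mono[OF n1]) (simp add: a_def)
      finally have c1: "- ((Dg z - Dg th) \<bullet> Dg th) \<le> b * a" .
      have "Dg z \<bullet> Dg th = (Dg z - Dg th) \<bullet> Dg th + a\<^sup>2"
        by (simp add: a_def inner_diff_left power2_norm_eq_inner)
      then have "- (Dg z \<bullet> Dg th) \<le> b * a - a\<^sup>2" using c1 by simp
      also have "b * a - a\<^sup>2 \<le> b\<^sup>2 / 4"
      proof -
        have "0 \<le> (a - b / 2)\<^sup>2" by simp
        then show ?thesis by (simp add: power2_eq_square algebra_simps)
      qed
      also have "b\<^sup>2 / 4 = c\<^sup>2 * k\<^sup>2 / 4 * (norm v)\<^sup>2" by (simp add: b_def power_mult_distrib)
      finally show ?thesis .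
    qed
    have hD: "(norm (Dg th))\<^sup>2 \<le> 2 * c * g th"
      by (rule grad_bound[OF g_diff Lip c_pos g_nonneg])
    have hG: "g th \<le> 2 * g z + c * k\<^sup>2 * (norm v)\<^sup>2"
      using g_theta_le[OF k0, of z v] by (simp add: z_def)
    have hK: "K * alpha + eta * (c\<^sup>2 * k\<^sup>2 / 4) \<le> K"
    proof -
      have a1: "0 < 1 - alpha" using a by simp
      have "eta \<le> e1 / (1 - alpha)"
        unfolding eta_def ep_def using e a1 by (intro divide_right_mono) auto
      then have "eta * (c\<^sup>2 * k\<^sup>2 / 4) \<le> e1 / (1 - alpha) * (c\<^sup>2 * k\<^sup>2 / 4)"
        by (rule mult_right_mono) simp
      also have "e1 / (1 - alpha) * (c\<^sup>2 * k\<^sup>2 / 4) = (e1 * c\<^sup>2 * k\<^sup>2 / (4 * (1 - alpha)\<^sup>2)) * (1 - alpha)"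
      proof -
        have gen: "\<And>s::real. s \<noteq> 0 \<Longrightarrow> e1 / s * (c\<^sup>2 * k\<^sup>2 / 4) = e1 * c\<^sup>2 * k\<^sup>2 / (4 * s\<^sup>2) * s"
          by (simp add: power2_eq_square field_simps)
        show ?thesis by (rule gen) (use a1 in simp)
      qed
      also have "\<dots> \<le> K * (1 - alpha)"
        using a1 K by (intro mult_right_mono) auto
      finally show ?thesis by (simp add: algebra_simps)
    qed
    have q0: "q \<ge> 0" using a c_pos K by (simp add: q_def)
    note main = real_alg[OF g_nonneg[of z] zero_le_power2[of "norm v"] g_nonneg[of th] K(1) c_pos Mv_pos eta0 q0
        hX sq_le[of th] hD hG hK Qq]
    show "integral\<^sup>L mu R \<le> (1 + Cst * (eps n)\<^sup>2) * lyapL g k K (th, v) + Cst * (eps n)\<^sup>2"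
      unfolding Rval Cst_def lyapL_def fst_conv snd_conv z_def[symmetric] ep_def[symmetric]
      using main by simp
  qed
  finally show ?thesis .
qed

lemma sqL:
  assumes k0: "0 \<le> k" and K: "K > 0"
  shows "(\<integral>\<^sup>+y. ennreal ((norm (DG th y))\<^sup>2) \<partial>mu)
    \<le> ennreal ((4 * c + 2 * Mv) * (2 + c * k\<^sup>2 / K) * lyapL g k K (th, v) + 2 * Mv)"
proof -
  have hD: "(norm (Dg th))\<^sup>2 \<le> 2 * c * g th"
    by (rule grad_bound[OF g_diff Lip c_pos g_nonneg])
  have hG: "g th \<le> 2 * g (th - k *\<^sub>R v) + c * k\<^sup>2 * (norm v)\<^sup>2"
    using g_theta_le[OF k0, of "th - k *\<^sub>R v" v] by simp
  have r: "2 * (norm (Dg th))\<^sup>2 + 2 * Mv * (1 + g th) \<le> (4 * c + 2 * Mv) * (2 + c * k\<^sup>2 / K) * lyapL g k K (th, v) + 2 * Mv"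
    unfolding lyapL_def fst_conv snd_conv
    by (rule real_alg2[OF g_nonneg zero_le_power2 g_nonneg K c_pos Mv_pos order_refl hD hG])
  show ?thesis using sq_nn[of th] ennreal_leI[OF r] by (rule order_trans)
qed

end


theorem lemma7:
  fixes M :: "'w measure" and S :: "'b measure"
    and xi :: "nat \<Rightarrow> 'w \<Rightarrow> 'b"
    and g :: "'a::euclidean_space \<Rightarrow> real" and Dg :: "'a \<Rightarrow> 'a"
    and G :: "'a \<Rightarrow> 'b \<Rightarrow> real" and DG :: "'a \<Rightarrow> 'b \<Rightarrow> 'a"
    and theta1 v0 :: 'a and alpha c Mv :: real and eps :: "nat \<Rightarrow> real"
  assumes P: "prob_space M"
    and xi_meas: "\<And>n. n \<ge> 1 \<Longrightarrow> xi n \<in> measurable M S"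
    and G_meas: "(\<lambda>(th, x). G th x) \<in> borel_measurable (borel \<Otimes>\<^sub>M S)"
    and DG_meas: "(\<lambda>(th, x). DG th x) \<in> borel_measurable (borel \<Otimes>\<^sub>M S)"
    and G_diff: "\<And>th x. x \<in> space S \<Longrightarrow>
        ((\<lambda>t. G t x) has_derivative (\<lambda>h. DG th x \<bullet> h)) (at th)"
    \<comment> \<open>(i)\<close>
    and indep: "prob_space.indep_vars M (\<lambda>_. S) xi {1..}"
    and G_int: "\<And>n x. n \<ge> 1 \<Longrightarrow> integrable (distr M S (xi n)) (G x)"
    and g_mean: "\<And>n x. n \<ge> 1 \<Longrightarrow> g x = (\<integral>y. G x y \<partial>distr M S (xi n))"
    and DG_int: "\<And>n x. n \<ge> 1 \<Longrightarrow> integrable (distr M S (xi n)) (DG x)"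
    and Dg_mean: "\<And>n x. n \<ge> 1 \<Longrightarrow> Dg x = (\<integral>y. DG x y \<partial>distr M S (xi n))"
    \<comment> \<open>(ii)\<close>
    and g_nonneg: "\<And>x. g x \<ge> 0"
    and g_diff: "\<And>x. (g has_derivative (\<lambda>h. Dg x \<bullet> h)) (at x)"
    and Dg_cont: "continuous_on UNIV Dg"
    and crit: "{th. Dg th = 0} \<noteq> {}"
    and c_pos: "c > 0"
    and Lip: "\<And>x y. norm (Dg x - Dg y) \<le> c * norm (x - y)"
    and Mv_pos: "Mv > 0"
    and var: "\<And>n th. n \<ge> 1 \<Longrightarrow>
        (\<integral>\<^sup>+ y. ennreal ((norm (Dg th - DG th y))\<^sup>2) \<partial>distr M S (xi n))
          \<le> ennreal (Mv * (1 + g th))"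
    \<comment> \<open>(iii)\<close>
    and alpha: "0 \<le> alpha" "alpha < 1"
    and eps_pos: "\<And>n. n \<ge> 1 \<Longrightarrow> eps n > 0"
    and eps_mono: "\<And>m n. 1 \<le> m \<Longrightarrow> m \<le> n \<Longrightarrow> eps n \<le> eps m"
    and eps_lim: "eps \<longlonglongrightarrow> 0"
    and eps_nsum: "\<not> summable eps"
    and eps_sq: "summable (\<lambda>n. (eps n)\<^sup>2)"
  shows "\<exists>C::real.
      (\<Sum>n. \<integral>\<^sup>+ w. ennreal ((norm (hb_v alpha eps DG theta1 v0 xi w n))\<^sup>2) \<partial>M) < ennreal C
    \<and> (AE w in M. summable (\<lambda>n. (norm (hb_v alpha eps DG theta1 v0 xi w n))\<^sup>2))"
proof -
  interpret P: prob_space M by (rule P)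
  define k where "k = alpha / (1 - alpha)"
  define e1 where "e1 = eps 1"
  define K where "K = e1 * c\<^sup>2 * k\<^sup>2 / (4 * (1 - alpha)\<^sup>2) + 1"
  define q where "q = c / (2 * (1 - alpha)\<^sup>2) + K / (1 - alpha)"
  define Cst where "Cst = q * (4 * c + 2 * Mv) * (2 + c * k\<^sup>2 / K) + 2 * q * Mv"
  define C1 where "C1 = (4 * c + 2 * Mv) * (2 + c * k\<^sup>2 / K)"
  define s where "s m w = hb_iter alpha eps DG theta1 v0 xi w m" for m w
  define Lf where "Lf = lyapL g k K"
  define Ly where "Ly m = (\<integral>\<^sup>+w. ennreal (Lf (s m w)) \<partial>M)" for m
  define T where "T = (\<Sum>n. (eps n)\<^sup>2)"
  define L0 where "L0 = Lf (theta1, v0)"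
  define B where "B = exp (Cst * T) * (L0 + Cst * T)"
  have a1: "0 < 1 - alpha" using alpha by simp
  have k0: "0 \<le> k" using alpha by (simp add: k_def)
  have e1p: "0 < e1" using eps_pos[of 1] by (simp add: e1_def)
  have K0: "K > 0"
  proof -
    have "0 \<le> e1 * c\<^sup>2 * k\<^sup>2 / (4 * (1 - alpha)\<^sup>2)" using e1p by simp
    then show ?thesis by (simp add: K_def)
  qed
  have Kb: "e1 * c\<^sup>2 * k\<^sup>2 / (4 * (1 - alpha)\<^sup>2) \<le> K" by (simp add: K_def)
  have q0: "q \<ge> 0" using a1 c_pos K0 by (simp add: q_def)
  have Cst0: "Cst \<ge> 0" using q0 c_pos Mv_pos K0 by (simp add: Cst_def)
  have C10: "C1 \<ge> 0" using c_pos Mv_pos K0 by (simp add: C1_def)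
  have Lf0: "0 \<le> Lf x" for x using K0 g_nonneg by (simp add: Lf_def lyapL_def)
  have L00: "0 \<le> L0" by (simp add: L0_def Lf0)
  have T0: "0 \<le> T" unfolding T_def using eps_sq by (intro suminf_nonneg) auto
  have hbl: "hbl (distr M S (xi n)) g Dg DG c Mv" if "n \<ge> 1" for n
  proof (rule hbl.intro)
    show "prob_space (distr M S (xi n))" using xi_meas[OF that] by (rule P.prob_space_distr)
    show "\<And>x. integrable (distr M S (xi n)) (DG x)" by (rule DG_int[OF that])
    show "\<And>x. Dg x = (\<integral>y. DG x y \<partial>distr M S (xi n))" by (rule Dg_mean[OF that])
    show "\<And>th. (\<integral>\<^sup>+ y. ennreal ((norm (Dg th - DG th y))\<^sup>2) \<partial>distr M S (xi n)) \<le> ennreal (Mv * (1 + g th))"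
      by (rule var[OF that])
  qed (fact g_nonneg g_diff Lip c_pos Mv_pos)+
  have smeas: "(\<lambda>w. s m w) \<in> borel_measurable M" for m
    unfolding s_def by (rule hb_meas[OF DG_meas xi_meas])
  have Lfc: "continuous_on UNIV Lf"
  proof -
    have gc: "continuous_on UNIV g"
      using g_diff by (meson continuous_at_imp_continuous_on has_derivative_continuous)
    show ?thesis unfolding Lf_def lyapL_def
      by (intro continuous_intros continuous_on_compose2[OF gc]) auto
  qed
  have Lfm: "Lf \<in> borel_measurable borel" by (rule borel_measurable_continuous_onI[OF Lfc])
  have lyap': "(\<integral>\<^sup>+y. ennreal (Lf (hstep alpha eps DG n (th, v) y)) \<partial>distr M S (xi n))
      \<le> ennreal ((1 + Cst * (eps n)\<^sup>2) * Lf (th, v) + Cst * (eps n)\<^sup>2)" if "n \<ge> 1" for n th v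
  proof -
    have en: "eps n \<le> e1" unfolding e1_def using eps_mono[of 1 n] that by simp
    show ?thesis unfolding Lf_def Cst_def q_def k_def
      by (rule hbl.lyap[OF hbl[OF that], where eps=eps and n=n, OF alpha eps_pos[OF that] en K0 Kb[unfolded k_def]])
  qed
  have Ly_step: "Ly (Suc m) \<le> ennreal (1 + Cst * (eps (Suc m))\<^sup>2) * Ly m + ennreal (Cst * (eps (Suc m))\<^sup>2)" for m
  proof -
    have Fm: "(\<lambda>p. ennreal (Lf (hstep alpha eps DG (Suc m) (fst p) (snd p)))) \<in> borel_measurable ((borel :: ('a \<times> 'a) measure) \<Otimes>\<^sub>M S)"
      using measurable_compose[OF hstep_meas[OF DG_meas, of alpha eps "Suc m"] Lfm] by simp
    have "Ly (Suc m) = (\<integral>\<^sup>+w. ennreal (Lf (hstep alpha eps DG (Suc m) (s m w) (xi (Suc m) w))) \<partial>M)"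
      unfolding Ly_def s_def hb_iter_Suc_step ..
    also have "\<dots> = (\<integral>\<^sup>+w. (\<integral>\<^sup>+y. ennreal (Lf (hstep alpha eps DG (Suc m) (s m w) y)) \<partial>distr M S (xi (Suc m))) \<partial>M)"
      using hb_key[OF P DG_meas xi_meas indep Fm, of alpha eps theta1 v0 m] unfolding s_def by simp
    also have "\<dots> \<le> (\<integral>\<^sup>+w. ennreal ((1 + Cst * (eps (Suc m))\<^sup>2) * Lf (s m w) + Cst * (eps (Suc m))\<^sup>2) \<partial>M)"
    proof (rule nn_integral_mono)
      fix w
      show "(\<integral>\<^sup>+y. ennreal (Lf (hstep alpha eps DG (Suc m) (s m w) y)) \<partial>distr M S (xi (Suc m)))
          \<le> ennreal ((1 + Cst * (eps (Suc m))\<^sup>2) * Lf (s m w) + Cst * (eps (Suc m))\<^sup>2)"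
        using lyap'[of "Suc m" "fst (s m w)" "snd (s m w)"] by simp
    qed
    also have "\<dots> = ennreal (1 + Cst * (eps (Suc m))\<^sup>2) * Ly m + ennreal (Cst * (eps (Suc m))\<^sup>2)"
    proof -
      have m1: "(\<lambda>w. ennreal ((1 + Cst * (eps (Suc m))\<^sup>2) * Lf (s m w))) \<in> borel_measurable M"
        using measurable_compose[OF smeas Lfm] by simp
      have "(\<integral>\<^sup>+w. ennreal ((1 + Cst * (eps (Suc m))\<^sup>2) * Lf (s m w) + Cst * (eps (Suc m))\<^sup>2) \<partial>M)
          = (\<integral>\<^sup>+w. ennreal ((1 + Cst * (eps (Suc m))\<^sup>2) * Lf (s m w)) + ennreal (Cst * (eps (Suc m))\<^sup>2) \<partial>M)"
        using Cst0 Lf0 by (intro nn_integral_cong) (simp add: ennreal_plus)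
      also have "\<dots> = (\<integral>\<^sup>+w. ennreal ((1 + Cst * (eps (Suc m))\<^sup>2) * Lf (s m w)) \<partial>M) + ennreal (Cst * (eps (Suc m))\<^sup>2)"
        using m1 by (subst nn_integral_add) (auto simp: P.emeasure_space_1)
      also have "(\<integral>\<^sup>+w. ennreal ((1 + Cst * (eps (Suc m))\<^sup>2) * Lf (s m w)) \<partial>M) = ennreal (1 + Cst * (eps (Suc m))\<^sup>2) * Ly m"
      proof -
        have a0: "0 \<le> 1 + Cst * (eps (Suc m))\<^sup>2" using Cst0 by simp
        have "(\<integral>\<^sup>+w. ennreal ((1 + Cst * (eps (Suc m))\<^sup>2) * Lf (s m w)) \<partial>M)
            = (\<integral>\<^sup>+w. ennreal (1 + Cst * (eps (Suc m))\<^sup>2) * ennreal (Lf (s m w)) \<partial>M)"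
          using a0 Lf0 by (intro nn_integral_cong ennreal_mult) auto
        also have "\<dots> = ennreal (1 + Cst * (eps (Suc m))\<^sup>2) * Ly m"
          unfolding Ly_def using measurable_compose[OF smeas Lfm] by (intro nn_integral_cmult) simp
        finally show ?thesis .
      qed
      finally show ?thesis .
    qed
    finally show ?thesis .
  qed
  define Sm where "Sm m = (\<Sum>i<m. (eps (Suc i))\<^sup>2)" for m
  have Sm0: "0 \<le> Sm m" for m unfolding Sm_def by (intro sum_nonneg) auto
  have SmT: "Sm m \<le> T" for m
  proof -
    have "Sm m \<le> (eps 0)\<^sup>2 + Sm m" by simp
    also have "\<dots> = (\<Sum>i<Suc m. (eps i)\<^sup>2)" unfolding Sm_def by (rule sum.lessThan_Suc_shift[symmetric])
    also have "\<dots> \<le> T" unfolding T_def using eps_sq by (intro sum_le_suminf) auto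
    finally show ?thesis .
  qed
  have Ly_b: "Ly m \<le> ennreal (exp (Cst * Sm m) * (L0 + Cst * Sm m))" for m
  proof (induction m)
    case 0
    have "Ly 0 = ennreal L0"
      by (simp add: Ly_def s_def L0_def P.emeasure_space_1)
    then show ?case by (simp add: Sm_def)
  next
    case (Suc m)
    define x where "x = Cst * (eps (Suc m))\<^sup>2"
    define E where "E = exp (Cst * Sm m)"
    define b where "b = L0 + Cst * Sm m"
    have x0: "0 \<le> x" using Cst0 by (simp add: x_def)
    have b0: "0 \<le> b" using L00 Cst0 Sm0[of m] by (simp add: b_def)
    have E1: "1 \<le> E" using Cst0 Sm0[of m] by (simp add: E_def)
    have "Ly (Suc m) \<le> ennreal (1 + x) * Ly m + ennreal x"
      using Ly_step[of m] by (simp add: x_def)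
    also have "\<dots> \<le> ennreal (1 + x) * ennreal (E * b) + ennreal x"
      using Suc.IH by (intro add_mono mult_left_mono) (auto simp: E_def b_def)
    also have "\<dots> = ennreal ((1 + x) * (E * b) + x)"
      using x0 b0 E1 by (simp add: ennreal_mult[symmetric] ennreal_plus[symmetric] del: ennreal_plus)
    also have "(1 + x) * (E * b) + x \<le> exp x * E * (b + x)"
    proof -
      have ex: "1 + x \<le> exp x" by (rule exp_ge_add_one_self)
      have "(1 + x) * (E * b) \<le> exp x * (E * b)"
        using E1 b0 by (intro mult_right_mono ex) auto
      moreover have "x \<le> exp x * E * x"
      proof -
        have ex1: "1 \<le> exp x" using x0 by simp
        have "1 * 1 \<le> exp x * E" using ex1 E1 by (intro mult_mono) auto
        then have "1 * x \<le> exp x * E * x" using x0 by (intro mult_right_mono) auto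
        then show ?thesis by simp
      qed
      ultimately show ?thesis by (simp add: algebra_simps)
    qed
    also have "exp x * E * (b + x) = exp (Cst * Sm (Suc m)) * (L0 + Cst * Sm (Suc m))"
      by (simp add: x_def E_def b_def Sm_def exp_add[symmetric] algebra_simps)
    finally show ?case using ennreal_leI by blast
  qed
  have Ly_B: "Ly m \<le> ennreal B" for m
  proof -
    have "exp (Cst * Sm m) * (L0 + Cst * Sm m) \<le> B"
      unfolding B_def using SmT[of m] Cst0 L00 Sm0[of m]
      by (intro mult_mono) (auto intro: mult_left_mono)
    then show ?thesis using Ly_b[of m] by (meson ennreal_leI order_trans)
  qed
  define W where "W = (C1 * B + 2 * Mv) / (1 - alpha)"
  have B0: "0 \<le> B" unfolding B_def using L00 Cst0 T0 by simp
  have W0: "0 \<le> W" unfolding W_def using C10 B0 Mv_pos a1 by simp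
  define av where "av m = (\<integral>\<^sup>+w. ennreal ((norm (snd (s m w)))\<^sup>2) \<partial>M)" for m
  define Dm where "Dm m = (\<integral>\<^sup>+w. ennreal ((norm (DG (fst (s m w)) (xi (Suc m) w)))\<^sup>2) \<partial>M)" for m
  have DGm: "(\<lambda>p. DG (fst (fst p)) (snd p)) \<in> borel_measurable ((borel :: ('a \<times> 'a) measure) \<Otimes>\<^sub>M S)"
  proof -
    have "(\<lambda>p. (fst (fst p), snd p)) \<in> measurable ((borel :: ('a \<times> 'a) measure) \<Otimes>\<^sub>M S) (borel \<Otimes>\<^sub>M S)"
      unfolding borel_prod[symmetric] by measurable
    from measurable_compose[OF this DG_meas] show ?thesis unfolding prod.case .
  qed
  have Dm_B: "Dm m \<le> ennreal (C1 * B + 2 * Mv)" for m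
  proof -
    have Fm: "(\<lambda>p. ennreal ((norm (DG (fst (fst p)) (snd p)))\<^sup>2)) \<in> borel_measurable ((borel :: ('a \<times> 'a) measure) \<Otimes>\<^sub>M S)"
      using DGm by measurable
    have "Dm m = (\<integral>\<^sup>+w. (\<integral>\<^sup>+y. ennreal ((norm (DG (fst (s m w)) y))\<^sup>2) \<partial>distr M S (xi (Suc m))) \<partial>M)"
      using hb_key[OF P DG_meas xi_meas indep Fm, of alpha eps theta1 v0 m] unfolding s_def Dm_def by simp
    also have "\<dots> \<le> (\<integral>\<^sup>+w. ennreal (C1 * Lf (s m w) + 2 * Mv) \<partial>M)"
    proof (rule nn_integral_mono)
      fix w
      show "(\<integral>\<^sup>+y. ennreal ((norm (DG (fst (s m w)) y))\<^sup>2) \<partial>distr M S (xi (Suc m))) \<le> ennreal (C1 * Lf (s m w) + 2 * Mv)"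
        using hbl.sqL[OF hbl[of "Suc m"] k0 K0, of "fst (s m w)" "snd (s m w)"]
        by (simp add: C1_def Lf_def)
    qed
    also have "\<dots> = ennreal C1 * Ly m + ennreal (2 * Mv)"
    proof -
      have "(\<integral>\<^sup>+w. ennreal (C1 * Lf (s m w) + 2 * Mv) \<partial>M) = (\<integral>\<^sup>+w. ennreal C1 * ennreal (Lf (s m w)) + ennreal (2 * Mv) \<partial>M)"
        using C10 Lf0 Mv_pos by (intro nn_integral_cong) (simp add: ennreal_mult)
      also have "\<dots> = (\<integral>\<^sup>+w. ennreal C1 * ennreal (Lf (s m w)) \<partial>M) + ennreal (2 * Mv)"
        using measurable_compose[OF smeas Lfm] by (subst nn_integral_add) (auto simp: P.emeasure_space_1)
      also have "(\<integral>\<^sup>+w. ennreal C1 * ennreal (Lf (s m w)) \<partial>M) = ennreal C1 * Ly m"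
        unfolding Ly_def using measurable_compose[OF smeas Lfm] by (intro nn_integral_cmult) simp
      finally show ?thesis .
    qed
    also have "\<dots> \<le> ennreal C1 * ennreal B + ennreal (2 * Mv)"
      using Ly_B[of m] by (intro add_mono mult_left_mono) auto
    also have "\<dots> = ennreal (C1 * B + 2 * Mv)"
      using C10 B0 Mv_pos by (simp add: ennreal_mult)
    finally show ?thesis .
  qed
  have snd_meas: "(\<lambda>w. snd (s m w)) \<in> borel_measurable M" for m
    using measurable_compose[OF smeas[of m, unfolded borel_prod[symmetric]] measurable_snd] .
  have fst_meas: "(\<lambda>w. fst (s m w)) \<in> borel_measurable M" for m
    using measurable_compose[OF smeas[of m, unfolded borel_prod[symmetric]] measurable_fst] .
  have d_meas: "(\<lambda>w. DG (fst (s m w)) (xi (Suc m) w)) \<in> borel_measurable M" for m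
  proof -
    have "(\<lambda>w. (s m w, xi (Suc m) w)) \<in> measurable M ((borel :: ('a \<times> 'a) measure) \<Otimes>\<^sub>M S)"
      using smeas xi_meas[of "Suc m"] by (intro measurable_Pair) auto
    from measurable_compose[OF this DGm] show ?thesis by simp
  qed
  have av_step: "av (Suc m) \<le> ennreal alpha * av m + ennreal ((eps (Suc m))\<^sup>2 * W)" for m
  proof -
    define ep where "ep = eps (Suc m)"
    have ep0: "0 \<le> ep" using eps_pos[of "Suc m"] by (simp add: ep_def)
    have pw: "(norm (snd (s (Suc m) w)))\<^sup>2 \<le> alpha * (norm (snd (s m w)))\<^sup>2 + ep\<^sup>2 / (1 - alpha) * (norm (DG (fst (s m w)) (xi (Suc m) w)))\<^sup>2" for w
    proof -
      have "snd (s (Suc m) w) = alpha *\<^sub>R snd (s m w) + ep *\<^sub>R DG (fst (s m w)) (xi (Suc m) w)"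
        unfolding s_def hb_iter_Suc_step by (simp add: hstep_def ep_def)
      then show ?thesis using norm_convex_sq[OF alpha ep0] by simp
    qed
    have "av (Suc m) \<le> (\<integral>\<^sup>+w. ennreal alpha * ennreal ((norm (snd (s m w)))\<^sup>2) + ennreal (ep\<^sup>2 / (1 - alpha)) * ennreal ((norm (DG (fst (s m w)) (xi (Suc m) w)))\<^sup>2) \<partial>M)"
      unfolding av_def
    proof (rule nn_integral_mono)
      fix w
      have "ennreal ((norm (snd (s (Suc m) w)))\<^sup>2) \<le> ennreal (alpha * (norm (snd (s m w)))\<^sup>2 + ep\<^sup>2 / (1 - alpha) * (norm (DG (fst (s m w)) (xi (Suc m) w)))\<^sup>2)"
        using pw by (rule ennreal_leI)
      also have "\<dots> = ennreal alpha * ennreal ((norm (snd (s m w)))\<^sup>2) + ennreal (ep\<^sup>2 / (1 - alpha)) * ennreal ((norm (DG (fst (s m w)) (xi (Suc m) w)))\<^sup>2)"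
      proof -
        have h3: "0 \<le> ep\<^sup>2 / (1 - alpha)" using a1 by simp
        have n1: "0 \<le> alpha * (norm (snd (s m w)))\<^sup>2" using alpha by simp
        have n2: "0 \<le> ep\<^sup>2 / (1 - alpha) * (norm (DG (fst (s m w)) (xi (Suc m) w)))\<^sup>2" using h3 by (intro mult_nonneg_nonneg) auto
        show ?thesis
          by (simp only: ennreal_plus[OF n1 n2] ennreal_mult[OF alpha(1) zero_le_power2] ennreal_mult[OF h3 zero_le_power2])
      qed
      finally show "ennreal ((norm (snd (s (Suc m) w)))\<^sup>2) \<le> ennreal alpha * ennreal ((norm (snd (s m w)))\<^sup>2) + ennreal (ep\<^sup>2 / (1 - alpha)) * ennreal ((norm (DG (fst (s m w)) (xi (Suc m) w)))\<^sup>2)" .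
    qed
    also have "\<dots> = ennreal alpha * av m + ennreal (ep\<^sup>2 / (1 - alpha)) * Dm m"
      unfolding av_def Dm_def using snd_meas[of m] d_meas[of m]
      by (subst nn_integral_add) (auto simp: nn_integral_cmult)
    also have "\<dots> \<le> ennreal alpha * av m + ennreal (ep\<^sup>2 / (1 - alpha)) * ennreal (C1 * B + 2 * Mv)"
      using Dm_B[of m] by (intro add_mono mult_left_mono) auto
    also have "ennreal (ep\<^sup>2 / (1 - alpha)) * ennreal (C1 * B + 2 * Mv) = ennreal ((eps (Suc m))\<^sup>2 * W)"
    proof -
      have h3: "0 \<le> ep\<^sup>2 / (1 - alpha)" using a1 by simp
      have h4: "0 \<le> C1 * B + 2 * Mv" using C10 B0 Mv_pos by simp
      have "ennreal (ep\<^sup>2 / (1 - alpha)) * ennreal (C1 * B + 2 * Mv) = ennreal (ep\<^sup>2 / (1 - alpha) * (C1 * B + 2 * Mv))"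
        by (rule ennreal_mult[OF h3 h4, symmetric])
      also have "ep\<^sup>2 / (1 - alpha) * (C1 * B + 2 * Mv) = (eps (Suc m))\<^sup>2 * W"
        by (simp add: W_def ep_def)
      finally show ?thesis .
    qed
    finally show ?thesis .
  qed
  define bb where "bb n = ennreal ((eps (Suc n))\<^sup>2 * W)" for n
  have tel: "ennreal (1 - alpha) * (\<Sum>n<Suc N. av n) + ennreal alpha * av N \<le> av 0 + (\<Sum>n<N. bb n)" for N
  proof (induction N)
    case 0
    have "ennreal (1 - alpha) * av 0 + ennreal alpha * av 0 = (ennreal (1 - alpha) + ennreal alpha) * av 0"
      by (simp add: distrib_right)
    also have "ennreal (1 - alpha) + ennreal alpha = 1"
      using alpha by (simp add: ennreal_plus[symmetric] del: ennreal_plus)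
    finally show ?case by simp
  next
    case (Suc N)
    have comb: "ennreal (1 - alpha) * x + ennreal alpha * x = x" for x
    proof -
      have "ennreal (1 - alpha) * x + ennreal alpha * x = (ennreal (1 - alpha) + ennreal alpha) * x"
        by (simp add: distrib_right)
      also have "ennreal (1 - alpha) + ennreal alpha = 1"
        using alpha by (simp add: ennreal_plus[symmetric] del: ennreal_plus)
      finally show ?thesis by simp
    qed
    have "ennreal (1 - alpha) * (\<Sum>n<Suc (Suc N). av n) + ennreal alpha * av (Suc N)
        = ennreal (1 - alpha) * (\<Sum>n<Suc N. av n) + (ennreal (1 - alpha) * av (Suc N) + ennreal alpha * av (Suc N))"
      by (simp add: distrib_left add.assoc)
    also have "\<dots> = ennreal (1 - alpha) * (\<Sum>n<Suc N. av n) + av (Suc N)" by (simp only: comb)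
    also have "\<dots> \<le> ennreal (1 - alpha) * (\<Sum>n<Suc N. av n) + (ennreal alpha * av N + bb N)"
      using av_step[of N] by (intro add_left_mono) (simp add: bb_def)
    also have "\<dots> = (ennreal (1 - alpha) * (\<Sum>n<Suc N. av n) + ennreal alpha * av N) + bb N"
      by (simp add: add.assoc)
    also have "\<dots> \<le> (av 0 + (\<Sum>n<N. bb n)) + bb N"
      using Suc.IH by (rule add_right_mono)
    also have "\<dots> = av 0 + (\<Sum>n<Suc N. bb n)" by (simp add: add.assoc)
    finally show ?case .
  qed
  define Z where "Z = ((norm v0)\<^sup>2 + W * T) / (1 - alpha)"
  have partial: "(\<Sum>n<N. av n) \<le> ennreal Z" for N
  proof -
    define SS where "SS = (\<Sum>n<Suc N. av n)"
    have "(\<Sum>n<N. av n) \<le> SS" unfolding SS_def by (simp add: sum.lessThan_Suc)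
    have t: "ennreal (1 - alpha) * SS \<le> av 0 + (\<Sum>n<N. bb n)"
      using add_increasing2[OF zero_le order_refl] tel[of N] unfolding SS_def by (rule order_trans)
    have bbs: "(\<Sum>n<N. bb n) \<le> ennreal (W * T)"
    proof -
      have "(\<Sum>n<N. bb n) = ennreal (\<Sum>n<N. (eps (Suc n))\<^sup>2 * W)"
        unfolding bb_def using W0 by (intro sum_ennreal) simp
      also have "(\<Sum>n<N. (eps (Suc n))\<^sup>2 * W) = W * Sm N"
        by (simp add: Sm_def sum_distrib_left mult.commute)
      also have "ennreal (W * Sm N) \<le> ennreal (W * T)"
        using SmT[of N] W0 by (intro ennreal_leI mult_left_mono)
      finally show ?thesis .
    qed
    have av0: "av 0 = ennreal ((norm v0)\<^sup>2)"
      by (simp add: av_def s_def P.emeasure_space_1)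
    have t2: "ennreal (1 - alpha) * SS \<le> ennreal ((norm v0)\<^sup>2 + W * T)"
    proof -
      have "ennreal (1 - alpha) * SS \<le> ennreal ((norm v0)\<^sup>2) + ennreal (W * T)"
        using t bbs av0 by (metis add_left_mono order_trans)
      also have "\<dots> = ennreal ((norm v0)\<^sup>2 + W * T)" using W0 T0 by simp
      finally show ?thesis .
    qed
    have "SS = ennreal (1 / (1 - alpha)) * (ennreal (1 - alpha) * SS)"
    proof -
      have "ennreal (1 / (1 - alpha)) * ennreal (1 - alpha) = ennreal (1 / (1 - alpha) * (1 - alpha))"
        using a1 by (intro ennreal_mult[symmetric]) auto
      also have "1 / (1 - alpha) * (1 - alpha) = 1" using a1 by simp
      finally show ?thesis by (simp add: mult.assoc[symmetric])
    qed
    also have "\<dots> \<le> ennreal (1 / (1 - alpha)) * ennreal ((norm v0)\<^sup>2 + W * T)"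
      using t2 by (rule mult_left_mono) simp
    also have "\<dots> = ennreal Z"
      unfolding Z_def using a1 W0 T0 by (subst ennreal_mult[symmetric]) auto
    finally show ?thesis using \<open>(\<Sum>n<N. av n) \<le> SS\<close> by (rule order_trans[rotated])
  qed
  have vs: "hb_v alpha eps DG theta1 v0 xi w n = snd (s n w)" for w n
    by (simp add: hb_v_def s_def)
  have avv: "(\<integral>\<^sup>+ w. ennreal ((norm (hb_v alpha eps DG theta1 v0 xi w n))\<^sup>2) \<partial>M) = av n" for n
    by (simp add: vs av_def)
  have sumle: "(\<Sum>n. av n) \<le> ennreal Z"
    by (rule suminf_le_const[OF summableI partial])
  have Z0: "0 \<le> Z" unfolding Z_def using W0 T0 a1 by simp
  have fin: "(\<Sum>n. av n) < ennreal (Z + 1)"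
  proof -
    have "ennreal Z < ennreal (Z + 1)" using Z0 by (simp add: ennreal_lessI)
    with sumle show ?thesis by (rule le_less_trans)
  qed
  have AEs: "AE w in M. summable (\<lambda>n. (norm (hb_v alpha eps DG theta1 v0 xi w n))\<^sup>2)"
  proof -
    have me: "(\<lambda>w. ennreal ((norm (snd (s n w)))\<^sup>2)) \<in> borel_measurable M" for n
      using snd_meas[of n] by measurable
    have "(\<integral>\<^sup>+w. (\<Sum>n. ennreal ((norm (snd (s n w)))\<^sup>2)) \<partial>M) = (\<Sum>n. av n)"
      unfolding av_def by (rule nn_integral_suminf[OF me])
    then have "(\<integral>\<^sup>+w. (\<Sum>n. ennreal ((norm (snd (s n w)))\<^sup>2)) \<partial>M) \<noteq> \<infinity>"
      using fin by (metis ennreal_less_top infinity_ennreal_def order.strict_trans neq_top_trans order_less_imp_le top.not_eq_extremum)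
    moreover have bm: "(\<lambda>w. \<Sum>n. ennreal ((norm (snd (s n w)))\<^sup>2)) \<in> borel_measurable M"
      using me by measurable
    ultimately have "AE w in M. (\<Sum>n. ennreal ((norm (snd (s n w)))\<^sup>2)) \<noteq> \<infinity>"
      using nn_integral_PInf_AE by blast
    then show ?thesis
      by (rule AE_mp) (auto simp: vs intro!: AE_I2 summable_suminf_not_top)
  qed
  show ?thesis using fin AEs avv by auto
qed


end
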